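(* Let $k\ge1$, let $\Pi_0,\Pi_1,\Pi\in\mathrm{Part}_2(2k)$ with $\Pi_0,\Pi_1$ perfect matchings and $\#(\Pi_0\vee\Pi_1\vee\Pi)=1$, and let $\varphi_0,\varphi_1$ be as follows: for $i=0,1$, $\varphi_i:\{1,\dots,2k\}\to V_i$ is a surjection whose level sets are exactly the parts of $\Pi_i\vee\Pi$, with $V_0\cap V_1=\emptyset$. Assume $\#(\Pi_0\vee\Pi_1)>1$. Then for every $A\in\Pi_0\vee\Pi_1$ there exist $m\in A$, a part $A'\in\Pi_0\vee\Pi_1$ with $A'\ne A$, and $m'\in A'$ such that $\{\varphi_0(m),\varphi_1(m)\}=\{\varphi_0(m'),\varphi_1(m')\}$.
   Context: $\mathrm{Part}(k)$ is the set of set partitions of $\{1,\dots,k\}$; $\Sigma$ refines $\Pi$ if every part of $\Sigma$ lies in a part of $\Pi$; $\Pi\vee\Sigma$ is the finest partition refined by both; a perfect matching is a partition all of whose parts have size 2; $\mathrm{Part}_2(k)$ is the set of partitions all of whose parts have size at least 2. *)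

theory Defs
  imports "HOL-Library.Disjoint_Sets"
begin

definition Part :: "nat \<Rightarrow> nat set set set" where
  "Part n = {P. partition_on {1..n} P}"

definition refines :: "nat set set \<Rightarrow> nat set set \<Rightarrow> bool" where
  "refines S P \<longleftrightarrow> (\<forall>B\<in>S. \<exists>C\<in>P. B \<subseteq> C)"

definition pjoin :: "nat \<Rightarrow> nat set set \<Rightarrow> nat set set \<Rightarrow> nat set set" where
  "pjoin n X Y = (THE J. J \<in> Part n \<and> refines X J \<and> refines Y J \<and>
      (\<forall>Q\<in>Part n. refines X Q \<and> refines Y Q \<longrightarrow> refines J Q))"

definition perfect_matching :: "nat set set \<Rightarrow> bool" where
  "perfect_matching P \<longleftrightarrow> (\<forall>B\<in>P. card B = 2)"

definition Part2 :: "nat \<Rightarrow> nat set set set" where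
  "Part2 n = {P \<in> Part n. \<forall>B\<in>P. card B \<ge> 2}"

end

theory Submission
  imports Defs
begin

lemma part_block_unique:
  assumes "partition_on S Q" "C \<in> Q" "C' \<in> Q" "x \<in> C" "x \<in> C'"
  shows "C = C'"
  using assms unfolding partition_on_def disjoint_def by blast

lemma refines_step:
  assumes "partition_on S Q" "refines X Q" "refines Y Q" "C \<in> Q" "y \<in> C"
    and "B \<in> X \<union> Y" "y \<in> B" "z \<in> B"
  shows "z \<in> C"
proof -
  obtain C' where "C' \<in> Q" "B \<subseteq> C'" using assms(2,3,6) unfolding refines_def by blast
  then have "C' = C" using part_block_unique[OF assms(1) _ assms(4)] assms(5,7) by blast
  then show ?thesis using \<open>B \<subseteq> C'\<close> assms(8) by blast
qed

lemma join_ex: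
  assumes X: "X \<in> Part n" and Y: "Y \<in> Part n"
  shows "\<exists>J. J \<in> Part n \<and> refines X J \<and> refines Y J \<and>
      (\<forall>Q\<in>Part n. refines X Q \<and> refines Y Q \<longrightarrow> refines J Q)"
proof -
  define S where "S = {1..n}"
  define R where "R = {(x,y). x \<in> S \<and> y \<in> S \<and> (\<exists>B\<in>X \<union> Y. x \<in> B \<and> y \<in> B)}"
  define E where "E = R\<^sup>+"
  have pX: "partition_on S X" and pY: "partition_on S Y" using X Y by (auto simp: Part_def S_def)
  have RS: "R \<subseteq> S \<times> S" unfolding R_def by auto
  have ES: "E \<subseteq> S \<times> S" unfolding E_def using RS trancl_subset_Sigma by blast
  have refl: "refl_on S E"
  proof (rule refl_onI)
    fix x assume "x \<in> S"
    then obtain B where "B \<in> X" "x \<in> B" using pX unfolding partition_on_def by blast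
    then have "(x,x) \<in> R" unfolding R_def using \<open>x \<in> S\<close> by blast
    then show "(x,x) \<in> E" unfolding E_def by blast
  qed
  have "sym R" unfolding R_def sym_def by blast
  then have "sym E" unfolding E_def by (rule sym_trancl)
  have "trans E" unfolding E_def by simp
  have eq: "equiv S E" using ES refl \<open>sym E\<close> \<open>trans E\<close> by (rule equivI)
  define J where "J = S // E"
  have pJ: "partition_on S J" unfolding J_def by (rule partition_on_quotient[OF eq])
  have rX: "refines X J" and rY: "refines Y J"
    unfolding refines_def
  proof -
    have "\<exists>C\<in>J. B \<subseteq> C" if "B \<in> X \<union> Y" for B
    proof -
      have BS: "B \<subseteq> S" "B \<noteq> {}" using that pX pY unfolding partition_on_def by auto
      then obtain x where "x \<in> B" by blast
      have "B \<subseteq> E `` {x}"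
      proof
        fix y assume "y \<in> B"
        then have "(x,y) \<in> R" unfolding R_def using \<open>x \<in> B\<close> BS that by blast
        then show "y \<in> E `` {x}" unfolding E_def by blast
      qed
      moreover have "E `` {x} \<in> J" unfolding J_def using BS \<open>x \<in> B\<close> by (auto intro: quotientI)
      ultimately show ?thesis by blast
    qed
    then show "\<forall>B\<in>X. \<exists>C\<in>J. B \<subseteq> C" "\<forall>B\<in>Y. \<exists>C\<in>J. B \<subseteq> C" by auto
  qed
  have minimal: "refines J Q" if Q: "Q \<in> Part n" "refines X Q" "refines Y Q" for Q
    unfolding refines_def
  proof
    fix D assume "D \<in> J"
    then obtain x where D: "D = E `` {x}" "x \<in> S" unfolding J_def by (auto elim: quotientE)
    have pQ: "partition_on S Q" using Q by (auto simp: Part_def S_def)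
    then obtain C where C: "C \<in> Q" "x \<in> C" using D unfolding partition_on_def by blast
    have "y \<in> C" if "(x,y) \<in> R\<^sup>+" for y
      using that
    proof (induction rule: trancl_induct)
      case (base y)
      then show ?case unfolding R_def
        using refines_step[OF pQ Q(2,3) C(1) C(2)] by blast
    next
      case (step y z)
      then show ?case unfolding R_def
        using refines_step[OF pQ Q(2,3) C(1)] by blast
    qed
    then have "D \<subseteq> C" unfolding D E_def by blast
    then show "\<exists>C\<in>Q. D \<subseteq> C" using C by blast
  qed
  have "J \<in> Part n" using pJ by (simp add: Part_def S_def)
  then show ?thesis using rX rY minimal by blast
qed

lemma refines_antisym:
  assumes "J1 \<in> Part n" "J2 \<in> Part n" "refines J1 J2" "refines J2 J1"
  shows "J1 = J2"
proof -
  have *: "A \<subseteq> B" if h: "P1 \<in> Part n" "P2 \<in> Part n" "refines P1 P2" "refines P2 P1" and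
     AB: "A = P1" "B = P2" for P1 P2 A B
  proof
    fix D assume "D \<in> A"
    have p1: "partition_on {1..n} P1" and p2: "partition_on {1..n} P2"
      using h by (auto simp: Part_def)
    obtain C where C: "C \<in> P2" "D \<subseteq> C" using h AB \<open>D \<in> A\<close> unfolding refines_def by blast
    obtain D' where D': "D' \<in> P1" "C \<subseteq> D'" using h C unfolding refines_def by blast
    have "D \<noteq> {}" using p1 \<open>D \<in> A\<close> AB unfolding partition_on_def by blast
    then obtain x where "x \<in> D" by blast
    then have "D = D'" using part_block_unique[OF p1, of D D' x] \<open>D \<in> A\<close> AB C D' by blast
    then have "D = C" using C D' by blast
    then show "D \<in> B" using C AB by blast
  qed
  show ?thesis using *[OF assms(1,2,3,4) refl refl] *[OF assms(2,1,4,3) refl refl] by (rule subset_antisym)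
qed

lemma pjoin_spec:
  assumes "X \<in> Part n" "Y \<in> Part n"
  shows "pjoin n X Y \<in> Part n \<and> refines X (pjoin n X Y) \<and> refines Y (pjoin n X Y) \<and>
      (\<forall>Q\<in>Part n. refines X Q \<and> refines Y Q \<longrightarrow> refines (pjoin n X Y) Q)"
proof -
  have "\<exists>!J. J \<in> Part n \<and> refines X J \<and> refines Y J \<and>
      (\<forall>Q\<in>Part n. refines X Q \<and> refines Y Q \<longrightarrow> refines J Q)"
  proof -
    obtain J where J: "J \<in> Part n \<and> refines X J \<and> refines Y J \<and>
      (\<forall>Q\<in>Part n. refines X Q \<and> refines Y Q \<longrightarrow> refines J Q)"
      using join_ex[OF assms] by blast
    show ?thesis
    proof (rule ex1I[of _ J])
      show "J \<in> Part n \<and> refines X J \<and> refines Y J \<and>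
      (\<forall>Q\<in>Part n. refines X Q \<and> refines Y Q \<longrightarrow> refines J Q)" by (rule J)
      fix J' assume J': "J' \<in> Part n \<and> refines X J' \<and> refines Y J' \<and>
      (\<forall>Q\<in>Part n. refines X Q \<and> refines Y Q \<longrightarrow> refines J' Q)"
      have "refines J J'" using J J' by blast
      moreover have "refines J' J" using J J' by blast
      ultimately show "J' = J" using refines_antisym[of J' n J] J J' by blast
    qed
  qed
  then show ?thesis unfolding pjoin_def by (rule theI')
qed

theorem lemma3p5:
  fixes k :: nat and Pi0 Pi1 Pi :: "nat set set"
    and \<phi>0 \<phi>1 :: "nat \<Rightarrow> 'v" and V0 V1 :: "'v set"
  assumes "k \<ge> 1"
    and "Pi0 \<in> Part2 (2*k)" and "Pi1 \<in> Part2 (2*k)" and "Pi \<in> Part2 (2*k)"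
    and "perfect_matching Pi0" and "perfect_matching Pi1"
    and "card (pjoin (2*k) (pjoin (2*k) Pi0 Pi1) Pi) = 1"
    and "\<phi>0 ` {1..2*k} = V0" and "\<phi>1 ` {1..2*k} = V1"
    and "{{x \<in> {1..2*k}. \<phi>0 x = v} | v. v \<in> V0} = pjoin (2*k) Pi0 Pi"
    and "{{x \<in> {1..2*k}. \<phi>1 x = v} | v. v \<in> V1} = pjoin (2*k) Pi1 Pi"
    and "V0 \<inter> V1 = {}"
    and "card (pjoin (2*k) Pi0 Pi1) > 1"
  shows "\<forall>A \<in> pjoin (2*k) Pi0 Pi1. \<exists>m\<in>A. \<exists>A'\<in>pjoin (2*k) Pi0 Pi1. A' \<noteq> A \<and>
           (\<exists>m'\<in>A'. {\<phi>0 m, \<phi>1 m} = {\<phi>0 m', \<phi>1 m'})"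
proof
  define n where "n = 2*k"
  define S where "S = {1..n}"
  define J where "J = pjoin n Pi0 Pi1"
  have P0: "Pi0 \<in> Part n" and P1: "Pi1 \<in> Part n" and P: "Pi \<in> Part n"
    using assms(2,3,4) by (auto simp: Part2_def n_def)
  note sJ = pjoin_spec[OF P0 P1, folded J_def]
  have JP: "J \<in> Part n" using sJ by blast
  note sT = pjoin_spec[OF JP P]
  note s0 = pjoin_spec[OF P0 P]
  note s1 = pjoin_spec[OF P1 P]
  have pJ: "partition_on S J" using JP by (simp add: Part_def S_def)
  have pP: "partition_on S Pi" using P by (simp add: Part_def S_def)
  fix A assume "A \<in> pjoin (2*k) Pi0 Pi1"
  then have AJ: "A \<in> J" by (simp add: J_def n_def)
  have AS: "A \<subseteq> S" "A \<noteq> {}" using pJ AJ unfolding partition_on_def by auto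
  obtain A2 where A2: "A2 \<in> J" "A2 \<noteq> A"
  proof -
    have "\<not> J \<subseteq> {A}"
    proof
      assume "J \<subseteq> {A}"
      then have "card J \<le> 1" using card_mono[of "{A}" J] by simp
      then show False using assms(13) by (simp add: J_def n_def)
    qed
    then show ?thesis using that by blast
  qed
  have A2S: "A2 \<subseteq> S" "A2 \<noteq> {}" "A2 \<inter> A = {}" using pJ A2 AJ
    unfolding partition_on_def disjoint_def by auto
  have "\<exists>B\<in>Pi. \<exists>m\<in>B. \<exists>m'\<in>B. m \<in> A \<and> m' \<notin> A"
  proof (rule ccontr)
    assume nc: "\<not> ?thesis"
    define Q where "Q = {A, S - A}"
    have pQ: "partition_on S Q" unfolding Q_def partition_on_def disjoint_def
      using AS A2S by auto
    then have QP: "Q \<in> Part n" by (simp add: Part_def S_def)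
    have rJ: "refines J Q" unfolding refines_def Q_def
    proof
      fix D assume "D \<in> J"
      then have "D = A \<or> D \<inter> A = {}" "D \<subseteq> S" using pJ AJ unfolding partition_on_def disjoint_def by auto
      then show "\<exists>C\<in>{A, S - A}. D \<subseteq> C" by blast
    qed
    have rP: "refines Pi Q" unfolding refines_def Q_def
    proof
      fix D assume "D \<in> Pi"
      then have "D \<subseteq> A \<or> D \<inter> A = {}" "D \<subseteq> S" using nc pP unfolding partition_on_def by auto
      then show "\<exists>C\<in>{A, S - A}. D \<subseteq> C" by blast
    qed
    define T where "T = pjoin n J Pi"
    have TP: "T \<in> Part n" and rT: "refines T Q" using sT QP rJ rP by (auto simp: T_def)
    have "card T = 1" using assms(7) by (simp add: T_def J_def n_def)
    then obtain t where "T = {t}" by (auto simp: card_Suc_eq)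
    moreover have "\<Union>T = S" using TP by (simp add: Part_def S_def partition_on_def)
    ultimately have "T = {S}" by simp
    then obtain C where "C \<in> Q" "S \<subseteq> C" using rT unfolding refines_def by blast
    then show False using AS A2S unfolding Q_def by blast
  qed
  then obtain B m m' where B: "B \<in> Pi" "m \<in> B" "m' \<in> B" "m \<in> A" "m' \<notin> A" by blast
  have m'S: "m' \<in> S" using pP B unfolding partition_on_def by blast
  then obtain A' where A': "A' \<in> J" "m' \<in> A'" using pJ unfolding partition_on_def by blast
  have "A' \<noteq> A" using A' B by blast
  have r0: "refines Pi (pjoin n Pi0 Pi)" using s0 by (elim conjE)
  have r1: "refines Pi (pjoin n Pi1 Pi)" using s1 by (elim conjE)
  obtain C0 where C0: "C0 \<in> pjoin n Pi0 Pi" "B \<subseteq> C0" using r0 B(1) unfolding refines_def by blast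
  obtain C1 where C1: "C1 \<in> pjoin n Pi1 Pi" "B \<subseteq> C1" using r1 B(1) unfolding refines_def by blast
  from C0(1) obtain v where "C0 = {x \<in> {1..2*k}. \<phi>0 x = v}" using assms(10) unfolding n_def by blast
  then have "\<phi>0 m = \<phi>0 m'" using C0(2) B(2,3) by blast
  moreover from C1(1) obtain w where "C1 = {x \<in> {1..2*k}. \<phi>1 x = w}" using assms(11) unfolding n_def by blast
  then have "\<phi>1 m = \<phi>1 m'" using C1(2) B(2,3) by blast
  ultimately show "\<exists>m\<in>A. \<exists>A'\<in>pjoin (2*k) Pi0 Pi1. A' \<noteq> A \<and>
           (\<exists>m'\<in>A'. {\<phi>0 m, \<phi>1 m} = {\<phi>0 m', \<phi>1 m'})"
    using B(4) A' \<open>A' \<noteq> A\<close> unfolding J_def n_def by (metis)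
qed

end
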